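(* Let $\mu$ be a nonnegative measure on $\mathbb R^d$ with $\int_{\mathbb R^d}\frac{\mu(d\xi)}{1+|\xi|^2}<\infty$. For $N>0$ set $C_N=\int_{|\xi|\ge N}\frac{\mu(d\xi)}{|\xi|^2}$ and $D_N=\mu\{\xi\in\mathbb R^d:|\xi|\le N\}$. Then for all integers $n\ge1$, all $t>0$ and all $N>0$, $$\int_{\mathbb R^{nd}}\int_{S_{t,n}}e^{-\sum_{i=1}^n w_i|\xi_i|^2}\,dw\,\prod_{i=1}^n\mu(d\xi_i)\le\sum_{k=0}^n\binom nk\frac{t^k}{k!}D_N^k(2C_N)^{n-k},$$ where $S_{t,n}=\{(w_1,\dots,w_n)\in[0,\infty)^n:w_1+\dots+w_n\le t\}$. *)

theory Defs
  imports "HOL-Analysis.Analysis"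
begin

definition simplex_set :: "real \<Rightarrow> nat \<Rightarrow> (nat \<Rightarrow> real) set" where
  "simplex_set t n = {w \<in> PiE {..<n} (\<lambda>_. {0..}). (\<Sum>i<n. w i) \<le> t}"

definition C_N :: "'a::euclidean_space measure \<Rightarrow> real \<Rightarrow> ennreal" where
  "C_N \<mu> N = (\<integral>\<^sup>+ \<xi>. indicator {\<xi>. norm \<xi> \<ge> N} \<xi> * ennreal (1 / (norm \<xi>)^2) \<partial>\<mu>)"

definition D_N :: "'a::euclidean_space measure \<Rightarrow> real \<Rightarrow> ennreal" where
  "D_N \<mu> N = emeasure \<mu> {\<xi>. norm \<xi> \<le> N}"

end

theory Submission imports Defs "HOL-Probability.Probability" begin

lemma exp_int:
  fixes a :: real assumes a: "0 < a"
  shows "(\<integral>\<^sup>+ y. indicator {0..} y * ennreal (exp (- (y * a))) \<partial>lborel) = ennreal (1 / a)"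
proof -
  interpret prob_space "density lborel (exponential_density a)"
    using prob_space_exponential_density[OF a] .
  have one: "(\<integral>\<^sup>+ y. ennreal (exponential_density a y) \<partial>lborel) = 1"
    using emeasure_space_1 by (simp add: emeasure_density)
  have "(\<integral>\<^sup>+ y. indicator {0..} y * ennreal (exp (- (y * a))) \<partial>lborel)
      = (\<integral>\<^sup>+ y. ennreal (1/a) * ennreal (exponential_density a y) \<partial>lborel)"
  proof (rule nn_integral_cong)
    fix y :: real
    show "indicator {0..} y * ennreal (exp (- (y * a))) = ennreal (1/a) * ennreal (exponential_density a y)"
      using a by (auto simp: exponential_density_def indicator_def ennreal_mult[symmetric] mult.commute)
  qed
  also have "\<dots> = ennreal (1/a)" by (subst nn_integral_cmult) (auto simp: one)
  finally show ?thesis .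
qed

lemma inner_bound:
  fixes a :: "nat \<Rightarrow> real" and I :: "nat set" and t :: real
  assumes I: "I \<subseteq> {..<n}" and a0: "\<And>i. 0 \<le> a i"
    and apos: "\<And>j. j \<in> {..<n} - I \<Longrightarrow> 0 < a j" and t: "0 \<le> t"
  shows "(\<integral>\<^sup>+ w. indicator (simplex_set t n) w * ennreal (exp (- (\<Sum>i<n. w i * a i)))
            \<partial>PiM {..<n} (\<lambda>_. lborel))
         \<le> ennreal (t ^ card I / fact (card I)) * (\<Prod>j\<in>{..<n}-I. ennreal (1 / a j))"
proof -
  define J where "J = {..<n} - I"
  have IJ: "I \<inter> J = {}" "I \<union> J = {..<n}" "finite I" "finite J"
    using I by (auto simp: J_def finite_subset)
  interpret product_sigma_finite "\<lambda>_::nat. lborel::real measure" by standard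
  define S where "S = {x::nat\<Rightarrow>real. (\<forall>i\<in>I. 0 \<le> x i) \<and> sum x I \<le> t}"
  define \<phi> where "\<phi> = (\<lambda>j y. indicator {0..} y * ennreal (exp (- (y * a j))) :: ennreal)"
  have Smeas: "S \<inter> space (Pi\<^sub>M I (\<lambda>_. lborel)) \<in> sets (Pi\<^sub>M I (\<lambda>_. lborel))"
  proof -
    have "S \<inter> space (Pi\<^sub>M I (\<lambda>_. lborel)) =
            Pi\<^sub>E I (\<lambda>_. {0..}) \<inter> (\<lambda>x. sum x I) -` {..t} \<inter> space (Pi\<^sub>M I (\<lambda>_. lborel))"
      by (auto simp: S_def space_PiM)
    also have "\<dots> \<in> sets (Pi\<^sub>M I (\<lambda>_. lborel))"
      using \<open>finite I\<close> by measurable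
    finally show ?thesis .
  qed
  define F where "F w = (if (\<forall>i\<in>I. 0 \<le> w i) \<and> sum w I \<le> t then 1 else 0) * (\<Prod>j\<in>J. \<phi> j (w j))" for w :: "nat \<Rightarrow> real"
  have Fmeas: "F \<in> borel_measurable (PiM (I \<union> J) (\<lambda>_. lborel))"
    unfolding F_def \<phi>_def using IJ by measurable
  have step1: "(\<integral>\<^sup>+ w. indicator (simplex_set t n) w * ennreal (exp (- (\<Sum>i<n. w i * a i)))
            \<partial>PiM {..<n} (\<lambda>_. lborel)) \<le> (\<integral>\<^sup>+ w. F w \<partial>PiM {..<n} (\<lambda>_. lborel))"
  proof (rule nn_integral_mono)
    fix w :: "nat \<Rightarrow> real"
    show "indicator (simplex_set t n) w * ennreal (exp (- (\<Sum>i<n. w i * a i))) \<le> F w"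
    proof (cases "w \<in> simplex_set t n")
      case False then show ?thesis by simp
    next
      case True
      then have nn: "\<And>i. i < n \<Longrightarrow> 0 \<le> w i" and sm: "(\<Sum>i<n. w i) \<le> t"
        by (auto simp: simplex_set_def)
      have "(\<Sum>i<n. w i) = sum w I + sum w J"
        using IJ by (metis sum.union_disjoint)
      moreover have "0 \<le> sum w J" using nn by (intro sum_nonneg) (auto simp: J_def)
      ultimately have sI: "sum w I \<le> t" using sm by linarith
      have "(\<Sum>i<n. w i * a i) = (\<Sum>i\<in>I. w i * a i) + (\<Sum>j\<in>J. w j * a j)"
        using IJ by (metis sum.union_disjoint)
      moreover have "0 \<le> (\<Sum>i\<in>I. w i * a i)"
        using I nn a0 by (intro sum_nonneg) auto
      ultimately have e: "exp (- (\<Sum>i<n. w i * a i)) \<le> exp (- (\<Sum>j\<in>J. w j * a j))" by simp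
      have "ennreal (exp (- (\<Sum>j\<in>J. w j * a j))) = (\<Prod>j\<in>J. \<phi> j (w j))"
      proof -
        have "exp (- (\<Sum>j\<in>J. w j * a j)) = (\<Prod>j\<in>J. exp (- (w j * a j)))"
          using IJ(4) by (simp add: sum_negf[symmetric] exp_sum)
        then have "ennreal (exp (- (\<Sum>j\<in>J. w j * a j))) = (\<Prod>j\<in>J. ennreal (exp (- (w j * a j))))"
          by (simp add: prod_ennreal)
        also have "\<dots> = (\<Prod>j\<in>J. \<phi> j (w j))"
          using nn by (intro prod.cong) (auto simp: \<phi>_def J_def)
        finally show ?thesis .
      qed
      then have le: "ennreal (exp (- (\<Sum>i<n. w i * a i))) \<le> (\<Prod>j\<in>J. \<phi> j (w j))"
        using ennreal_leI[OF e] by simp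
      have "(\<forall>i\<in>I. 0 \<le> w i)" using nn I by auto
      with le True sI show ?thesis
        by (simp add: F_def)
    qed
  qed
  also have "(\<integral>\<^sup>+ w. F w \<partial>PiM {..<n} (\<lambda>_. lborel))
      = (\<integral>\<^sup>+ x. (\<integral>\<^sup>+ y. F (merge I J (x, y)) \<partial>(Pi\<^sub>M J (\<lambda>_. lborel))) \<partial>(Pi\<^sub>M I (\<lambda>_. lborel)))"
    using product_nn_integral_fold[OF IJ(1,3,4) Fmeas] IJ(2) by simp
  also have "\<dots> = (\<integral>\<^sup>+ x. indicator (S \<inter> space (Pi\<^sub>M I (\<lambda>_. lborel))) x *
        (\<integral>\<^sup>+ y. (\<Prod>j\<in>J. \<phi> j (y j)) \<partial>(Pi\<^sub>M J (\<lambda>_. lborel))) \<partial>(Pi\<^sub>M I (\<lambda>_. lborel)))"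
  proof (rule nn_integral_cong)
    fix x :: "nat \<Rightarrow> real" assume x: "x \<in> space (Pi\<^sub>M I (\<lambda>_. lborel))"
    have "(\<integral>\<^sup>+ y. F (merge I J (x, y)) \<partial>(Pi\<^sub>M J (\<lambda>_. lborel)))
        = (\<integral>\<^sup>+ y. indicator (S \<inter> space (Pi\<^sub>M I (\<lambda>_. lborel))) x * (\<Prod>j\<in>J. \<phi> j (y j)) \<partial>(Pi\<^sub>M J (\<lambda>_. lborel)))"
    proof (rule nn_integral_cong)
      fix y :: "nat \<Rightarrow> real"
      have "sum (merge I J (x, y)) I = sum x I" using IJ by (intro sum.cong) auto
      moreover have "(\<Prod>j\<in>J. \<phi> j (merge I J (x, y) j)) = (\<Prod>j\<in>J. \<phi> j (y j))"
        using IJ by (intro prod.cong) auto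
      ultimately show "F (merge I J (x, y)) = indicator (S \<inter> space (Pi\<^sub>M I (\<lambda>_. lborel))) x * (\<Prod>j\<in>J. \<phi> j (y j))"
        using x IJ by (auto simp: F_def S_def indicator_def)
    qed
    also have "\<dots> = indicator (S \<inter> space (Pi\<^sub>M I (\<lambda>_. lborel))) x * (\<integral>\<^sup>+ y. (\<Prod>j\<in>J. \<phi> j (y j)) \<partial>(Pi\<^sub>M J (\<lambda>_. lborel)))"
      by (rule nn_integral_cmult) (unfold \<phi>_def, use IJ in measurable)
    finally show "(\<integral>\<^sup>+ y. F (merge I J (x, y)) \<partial>(Pi\<^sub>M J (\<lambda>_. lborel))) = indicator (S \<inter> space (Pi\<^sub>M I (\<lambda>_. lborel))) x * (\<integral>\<^sup>+ y. (\<Prod>j\<in>J. \<phi> j (y j)) \<partial>(Pi\<^sub>M J (\<lambda>_. lborel)))" .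
  qed
  also have "(\<integral>\<^sup>+ y. (\<Prod>j\<in>J. \<phi> j (y j)) \<partial>(Pi\<^sub>M J (\<lambda>_. lborel))) = (\<Prod>j\<in>J. ennreal (1 / a j))"
  proof -
    have "(\<integral>\<^sup>+ y. (\<Prod>j\<in>J. \<phi> j (y j)) \<partial>(Pi\<^sub>M J (\<lambda>_. lborel))) = (\<Prod>j\<in>J. integral\<^sup>N lborel (\<phi> j))"
      by (rule product_nn_integral_prod) (use IJ in \<open>auto simp: \<phi>_def\<close>)
    also have "\<dots> = (\<Prod>j\<in>J. ennreal (1 / a j))"
      by (intro prod.cong refl) (simp add: \<phi>_def exp_int apos J_def)
    finally show ?thesis .
  qed
  also have "(\<integral>\<^sup>+ x. indicator (S \<inter> space (Pi\<^sub>M I (\<lambda>_. lborel))) x * (\<Prod>j\<in>J. ennreal (1 / a j)) \<partial>(Pi\<^sub>M I (\<lambda>_. lborel)))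
     = emeasure (Pi\<^sub>M I (\<lambda>_. lborel)) (S \<inter> space (Pi\<^sub>M I (\<lambda>_. lborel))) * (\<Prod>j\<in>J. ennreal (1 / a j))"
    using Smeas by (simp add: nn_integral_multc)
  also have "emeasure (Pi\<^sub>M I (\<lambda>_. lborel)) (S \<inter> space (Pi\<^sub>M I (\<lambda>_. lborel))) = ennreal (t ^ card I / fact (card I))"
    using emeasure_std_simplex_aux[of I t] IJ t unfolding S_def
    by (simp add: ennreal_power divide_ennreal ennreal_fact[symmetric])
  finally show ?thesis by (simp add: J_def)
qed


lemma sigma_fin:
  fixes \<mu> :: "'a::euclidean_space measure"
  assumes sb: "sets \<mu> = sets borel"
    and fin: "(\<integral>\<^sup>+ \<xi>. ennreal (1 / (1 + (norm \<xi>)^2)) \<partial>\<mu>) < \<infinity>"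
  shows "sigma_finite_measure \<mu>"
proof
  have sp: "space \<mu> = UNIV" using sets_eq_imp_space_eq[OF sb] by simp
  have ms: "{\<xi>::'a. norm \<xi> \<le> r} \<in> sets \<mu>" for r :: real
    unfolding sb by measurable
  have fm: "emeasure \<mu> {\<xi>. norm \<xi> \<le> real m} \<noteq> \<infinity>" for m :: nat
  proof -
    have "emeasure \<mu> {\<xi>. norm \<xi> \<le> real m} = (\<integral>\<^sup>+ \<xi>. indicator {\<xi>. norm \<xi> \<le> real m} \<xi> \<partial>\<mu>)"
      using ms by simp
    also have "\<dots> \<le> (\<integral>\<^sup>+ \<xi>. ennreal (1 + (real m)^2) * ennreal (1 / (1 + (norm \<xi>)^2)) \<partial>\<mu>)"
    proof (rule nn_integral_mono)
      fix \<xi> :: 'a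
      show "indicator {\<xi>. norm \<xi> \<le> real m} \<xi> \<le> ennreal (1 + (real m)^2) * ennreal (1 / (1 + (norm \<xi>)^2))"
      proof (cases "norm \<xi> \<le> real m")
        case True
        then have "(norm \<xi>)^2 \<le> (real m)^2" by (intro power_mono) auto
        moreover have "0 < 1 + (norm \<xi>)^2" by (simp add: add_pos_nonneg)
        ultimately have "1 \<le> (1 + (real m)^2) * (1 / (1 + (norm \<xi>)^2))"
          by (simp add: le_divide_eq)
        then have le1: "ennreal 1 \<le> ennreal ((1 + (real m)^2) * (1 / (1 + (norm \<xi>)^2)))"
          by (rule ennreal_leI)
        have eq: "ennreal (1 + (real m)^2) * ennreal (1 / (1 + (norm \<xi>)^2)) = ennreal ((1 + (real m)^2) * (1 / (1 + (norm \<xi>)^2)))"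
          by (rule ennreal_mult[symmetric]) auto
        have ind: "indicator {\<xi>. norm \<xi> \<le> real m} \<xi> = ennreal 1" using True by simp
        show ?thesis unfolding ind eq by (rule le1)
      qed simp
    qed
    also have "\<dots> = ennreal (1 + (real m)^2) * (\<integral>\<^sup>+ \<xi>. ennreal (1 / (1 + (norm \<xi>)^2)) \<partial>\<mu>)"
      by (rule nn_integral_cmult) (use sb in \<open>simp add: measurable_cong_sets[OF sb refl]\<close>)
    also have "\<dots> < \<infinity>" using fin by (simp add: ennreal_mult_less_top)
    finally show ?thesis by simp
  qed
  show "\<exists>A::'a set set. countable A \<and> A \<subseteq> sets \<mu> \<and> (\<Union>A) = space \<mu> \<and> (\<forall>a\<in>A. emeasure \<mu> a \<noteq> \<infinity>)"
  proof (intro exI conjI)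
    show "countable (range (\<lambda>m::nat. {\<xi>::'a. norm \<xi> \<le> real m}))" by simp
    show "range (\<lambda>m::nat. {\<xi>::'a. norm \<xi> \<le> real m}) \<subseteq> sets \<mu>" using ms by auto
    show "\<Union> (range (\<lambda>m::nat. {\<xi>::'a. norm \<xi> \<le> real m})) = space \<mu>"
      unfolding sp by (auto intro: real_arch_simple)
    show "\<forall>a\<in>range (\<lambda>m::nat. {\<xi>::'a. norm \<xi> \<le> real m}). emeasure \<mu> a \<noteq> \<infinity>"
      using fm by auto
  qed
qed


lemma sum_subsets_card:
  fixes c :: "nat \<Rightarrow> 'b::comm_semiring_1"
  shows "(\<Sum>K\<in>Pow {..<n}. c (card K)) = (\<Sum>k\<le>n. of_nat (n choose k) * c k)"
proof -
  have "(\<Sum>K\<in>Pow {..<n}. c (card K)) = (\<Sum>k\<le>n. \<Sum>K\<in>{K \<in> Pow {..<n}. card K = k}. c (card K))"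
    by (rule sum.group[symmetric]) (auto simp: card_mono[of "{..<n}", simplified])
  also have "\<dots> = (\<Sum>k\<le>n. of_nat (n choose k) * c k)"
  proof (rule sum.cong[OF refl])
    fix k assume "k \<in> {..n}"
    have "(\<Sum>K\<in>{K \<in> Pow {..<n}. card K = k}. c (card K)) = (\<Sum>K\<in>{K \<in> Pow {..<n}. card K = k}. c k)"
      by (rule sum.cong) auto
    also have "\<dots> = of_nat (card {K \<in> Pow {..<n}. card K = k}) * c k" by simp
    also have "card {K \<in> Pow {..<n}. card K = k} = n choose k"
      using n_subsets[of "{..<n}" k] by simp
    finally show "(\<Sum>K\<in>{K \<in> Pow {..<n}. card K = k}. c (card K)) = of_nat (n choose k) * c k" .
  qed
  finally show ?thesis .
qed

theorem mainTheorem2: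
  fixes \<mu> :: "'a::euclidean_space measure" and n :: nat and t N :: real
  assumes "sets \<mu> = sets borel"
    and "(\<integral>\<^sup>+ \<xi>. ennreal (1 / (1 + (norm \<xi>)^2)) \<partial>\<mu>) < \<infinity>"
    and "n \<ge> 1" and "t > 0" and "N > 0"
  shows "(\<integral>\<^sup>+ \<xi>. (\<integral>\<^sup>+ w. indicator (simplex_set t n) w
              * ennreal (exp (- (\<Sum>i<n. w i * (norm (\<xi> i))^2)))
            \<partial>(PiM {..<n} (\<lambda>_. lborel)))
          \<partial>(PiM {..<n} (\<lambda>_. \<mu>)))
    \<le> (\<Sum>k\<le>n. of_nat (n choose k) * ennreal (t ^ k / fact k)
              * (D_N \<mu> N) ^ k * (2 * C_N \<mu> N) ^ (n - k))"
proof -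
  note sb = assms(1)
  have sf: "sigma_finite_measure \<mu>" by (rule sigma_fin[OF assms(1,2)])
  interpret P: product_sigma_finite "\<lambda>_::nat. \<mu>"
    by (rule product_sigma_finite.intro) (rule sf)
  define f where "f = (\<lambda>(K::nat set) (i::nat) (x::'a). if i \<in> K then indicator {\<xi>. norm \<xi> \<le> N} x
        else indicator {\<xi>. N \<le> norm \<xi>} x * ennreal (1 / (norm x)^2) :: ennreal)"
  define c where "c = (\<lambda>k::nat. ennreal (t ^ k / fact k))"
  have fm[measurable]: "f K i \<in> borel_measurable \<mu>" for K i
    unfolding f_def measurable_cong_sets[OF sb refl] by measurable
  have step1: "(\<integral>\<^sup>+ \<xi>. (\<integral>\<^sup>+ w. indicator (simplex_set t n) w
              * ennreal (exp (- (\<Sum>i<n. w i * (norm (\<xi> i))^2)))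
            \<partial>(PiM {..<n} (\<lambda>_. lborel))) \<partial>(PiM {..<n} (\<lambda>_. \<mu>)))
      \<le> (\<integral>\<^sup>+ \<xi>. (\<Sum>K\<in>Pow {..<n}. c (card K) * (\<Prod>i<n. f K i (\<xi> i))) \<partial>(PiM {..<n} (\<lambda>_. \<mu>)))"
  proof (rule nn_integral_mono)
    fix \<xi> :: "nat \<Rightarrow> 'a"
    define I where "I = {i \<in> {..<n}. norm (\<xi> i) \<le> N}"
    have I: "I \<subseteq> {..<n}" by (auto simp: I_def)
    have "(\<integral>\<^sup>+ w. indicator (simplex_set t n) w * ennreal (exp (- (\<Sum>i<n. w i * (norm (\<xi> i))^2)))
            \<partial>(PiM {..<n} (\<lambda>_. lborel)))
        \<le> ennreal (t ^ card I / fact (card I)) * (\<Prod>j\<in>{..<n}-I. ennreal (1 / (norm (\<xi> j))^2))"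
    proof (rule inner_bound[OF I])
      fix j assume "j \<in> {..<n} - I"
      then have "N < norm (\<xi> j)" by (auto simp: I_def)
      then have "0 < norm (\<xi> j)" using assms(5) by linarith
      then show "0 < (norm (\<xi> j))^2" by simp
    qed (use assms(4) in auto)
    also have "(\<Prod>j\<in>{..<n}-I. ennreal (1 / (norm (\<xi> j))^2)) = (\<Prod>i<n. f I i (\<xi> i))"
    proof -
      have "(\<Prod>i<n. f I i (\<xi> i)) = (\<Prod>i<n. if i \<in> I then 1 else ennreal (1 / (norm (\<xi> i))^2))"
        using assms(5) by (intro prod.cong) (auto simp: f_def I_def indicator_def)
      also have "\<dots> = (\<Prod>j\<in>{..<n}-I. ennreal (1 / (norm (\<xi> j))^2))"
        by (subst prod.If_cases) (auto simp: Diff_eq)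
      finally show ?thesis by simp
    qed
    also have "ennreal (t ^ card I / fact (card I)) * (\<Prod>i<n. f I i (\<xi> i)) = c (card I) * (\<Prod>i<n. f I i (\<xi> i))"
      by (simp add: c_def)
    also have "\<dots> \<le> (\<Sum>K\<in>Pow {..<n}. c (card K) * (\<Prod>i<n. f K i (\<xi> i)))"
      by (rule member_le_sum[of I "Pow {..<n}" "\<lambda>K. c (card K) * (\<Prod>i<n. f K i (\<xi> i))"]) (use I in auto)
    finally show "(\<integral>\<^sup>+ w. indicator (simplex_set t n) w * ennreal (exp (- (\<Sum>i<n. w i * (norm (\<xi> i))^2)))
            \<partial>(PiM {..<n} (\<lambda>_. lborel))) \<le> (\<Sum>K\<in>Pow {..<n}. c (card K) * (\<Prod>i<n. f K i (\<xi> i)))" .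
  qed
  also have "(\<integral>\<^sup>+ \<xi>. (\<Sum>K\<in>Pow {..<n}. c (card K) * (\<Prod>i<n. f K i (\<xi> i))) \<partial>(PiM {..<n} (\<lambda>_. \<mu>)))
      = (\<Sum>K\<in>Pow {..<n}. c (card K) * (\<integral>\<^sup>+ \<xi>. (\<Prod>i<n. f K i (\<xi> i)) \<partial>(PiM {..<n} (\<lambda>_. \<mu>))))"
    by (subst nn_integral_sum) (auto intro!: sum.cong nn_integral_cmult)
  also have "\<dots> = (\<Sum>K\<in>Pow {..<n}. c (card K) * (D_N \<mu> N ^ card K * C_N \<mu> N ^ (n - card K)))"
  proof (rule sum.cong[OF refl])
    fix K assume K: "K \<in> Pow {..<n}"
    have "(\<integral>\<^sup>+ \<xi>. (\<Prod>i<n. f K i (\<xi> i)) \<partial>(PiM {..<n} (\<lambda>_. \<mu>))) = (\<Prod>i<n. integral\<^sup>N \<mu> (f K i))"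
      by (rule P.product_nn_integral_prod) auto
    also have "\<dots> = (\<Prod>i<n. if i \<in> K then D_N \<mu> N else C_N \<mu> N)"
    proof (rule prod.cong[OF refl])
      fix i
      have ms: "{\<xi>::'a. norm \<xi> \<le> N} \<in> sets \<mu>" unfolding sb by measurable
      show "integral\<^sup>N \<mu> (f K i) = (if i \<in> K then D_N \<mu> N else C_N \<mu> N)"
        using ms by (auto simp: f_def D_N_def C_N_def)
    qed
    also have "\<dots> = D_N \<mu> N ^ card K * C_N \<mu> N ^ (n - card K)"
    proof -
      have "{..<n} \<inter> {i. i \<in> K} = K" "{..<n} \<inter> - {i. i \<in> K} = {..<n} - K" using K by auto
      moreover have "card ({..<n} - K) = n - card K" using K by (simp add: card_Diff_subset finite_subset)
      ultimately show ?thesis by (simp add: prod.If_cases)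
    qed
    finally show "c (card K) * (\<integral>\<^sup>+ \<xi>. (\<Prod>i<n. f K i (\<xi> i)) \<partial>(PiM {..<n} (\<lambda>_. \<mu>)))
        = c (card K) * (D_N \<mu> N ^ card K * C_N \<mu> N ^ (n - card K))" by simp
  qed
  also have "\<dots> = (\<Sum>k\<le>n. of_nat (n choose k) * (c k * (D_N \<mu> N ^ k * C_N \<mu> N ^ (n - k))))"
    by (rule sum_subsets_card)
  also have "\<dots> \<le> (\<Sum>k\<le>n. of_nat (n choose k) * ennreal (t ^ k / fact k)
              * (D_N \<mu> N) ^ k * (2 * C_N \<mu> N) ^ (n - k))"
  proof (rule sum_mono)
    fix k
    have "C_N \<mu> N \<le> 2 * C_N \<mu> N" by (simp add: mult_2 add_increasing)
    then have "C_N \<mu> N ^ (n - k) \<le> (2 * C_N \<mu> N) ^ (n - k)" by (rule power_mono) simp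
    then show "of_nat (n choose k) * (c k * (D_N \<mu> N ^ k * C_N \<mu> N ^ (n - k)))
        \<le> of_nat (n choose k) * ennreal (t ^ k / fact k) * (D_N \<mu> N) ^ k * (2 * C_N \<mu> N) ^ (n - k)"
      by (simp add: c_def mult.assoc mult_left_mono)
  qed
  finally show ?thesis .
qed

end
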